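(* Let $v$ be a vertex of $\mathcal T$ whose stabilizer $\Gamma_v$ in $\Gamma$ is isomorphic to $\mathbb F_{q^2}^\times$. Then $\Gamma_v$ acts transitively on the set of edges of $\mathcal T$ with origin $v$.
   Context: Let $q$ be a prime power, $F=\mathbb F_q(T)$, $A=\mathbb F_q[T]$, $\infty$ the place of $1/T$, $K=F_\infty$ with ring of integers $\mathcal O$. Let $D$ be a quaternion division algebra over $F$ with $D\otimes_FK\cong M_2(K)$, $\Lambda$ a maximal $A$-order in $D$ and $\Gamma=\Lambda^\times$, viewed as a subgroup of $\mathrm{GL}_2(K)$ via a fixed isomorphism $D\otimes_FK\cong M_2(K)$. $\mathcal T$ is the Bruhat–Tits tree of $\mathrm{PGL}_2(K)$ (vertices: homothety classes of $\mathcal O$-lattices in $K^2$, adjacency by index-$q$ inclusion; each vertex is the origin of $q+1$ edges), with the natural action of $\Gamma$. *)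

theory Defs
  imports "HOL-Analysis.Finite_Cartesian_Product"
          "HOL-Computational_Algebra.Formal_Laurent_Series"
begin

text \<open>The finite field F_q is a type 'a of class {finite, field}; q = CARD('a).
  K = F_q((1/T)) is the field of formal Laurent series 'a fls in the uniformizer
  pi = 1/T (= fls_X). Thus T is fls_X_inv, and F = F_q(T), A = F_q[T] are
  realised as subsets of K.\<close>

type_synonym 'a mat2 = "'a fls ^ 2 ^ 2"
type_synonym 'a vec2 = "'a fls ^ 2"

definition poly_to_K :: "'a::field poly \<Rightarrow> 'a fls" where
  "poly_to_K p = (\<Sum>i\<le>degree p. fls_const (coeff p i) * fls_X_inv ^ i)"

definition A_ring :: "'a::field fls set" where
  "A_ring = range poly_to_K"

definition F_field :: "'a::field fls set" where
  "F_field = {a / b | a b. a \<in> A_ring \<and> b \<in> A_ring \<and> b \<noteq> 0}"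

definition O_ring :: "'a::field fls set" where
  "O_ring = {x. x = 0 \<or> fls_subdegree x \<ge> 0}"

definition smat :: "'a::field fls \<Rightarrow> 'a mat2 \<Rightarrow> 'a mat2" where
  "smat c M = mat c ** M"

definition span_over :: "'a::field fls set \<Rightarrow> 'a mat2 set \<Rightarrow> 'a mat2 set" where
  "span_over S B = {M. \<exists>c. M = (\<Sum>b\<in>B. smat (c b) b) \<and> (\<forall>b\<in>B. c b \<in> S)}"

definition indep_over :: "'a::field fls set \<Rightarrow> 'a mat2 set \<Rightarrow> bool" where
  "indep_over S B \<longleftrightarrow> (\<forall>c. (\<forall>b\<in>B. c b \<in> S) \<and> (\<Sum>b\<in>B. smat (c b) b) = 0
       \<longrightarrow> (\<forall>b\<in>B. c b = 0))"

text \<open>D is a quaternion division algebra over F, given as an F-subalgebra of M_2(K)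
  such that the inclusion induces D \<otimes>_F K \<cong> M_2(K): D has an F-basis of 4 elements
  which is a K-basis of M_2(K) (K-linear independence + dimension 4); then the center
  of D is F automatically.\<close>
definition quaternion_division_algebra :: "'a::{finite,field} mat2 set \<Rightarrow> bool" where
  "quaternion_division_algebra D \<longleftrightarrow>
     (\<exists>B. finite B \<and> card B = 4 \<and> D = span_over F_field B \<and> indep_over UNIV B) \<and>
     mat 1 \<in> D \<and> (\<forall>x\<in>D. \<forall>y\<in>D. x ** y \<in> D) \<and>
     (\<forall>x\<in>D. x \<noteq> 0 \<longrightarrow> (\<exists>y\<in>D. x ** y = mat 1 \<and> y ** x = mat 1))"

definition A_order :: "'a::{finite,field} mat2 set \<Rightarrow> 'a mat2 set \<Rightarrow> bool" where
  "A_order D \<Lambda> \<longleftrightarrow> \<Lambda> \<subseteq> D \<and> mat 1 \<in> \<Lambda> \<and> (\<forall>x\<in>\<Lambda>. \<forall>y\<in>\<Lambda>. x ** y \<in> \<Lambda>) \<and>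
     (\<exists>G. finite G \<and> \<Lambda> = span_over A_ring G) \<and>
     (\<forall>d\<in>D. \<exists>a\<in>F_field. \<exists>x\<in>\<Lambda>. d = smat a x)"

definition maximal_A_order :: "'a::{finite,field} mat2 set \<Rightarrow> 'a mat2 set \<Rightarrow> bool" where
  "maximal_A_order D \<Lambda> \<longleftrightarrow> A_order D \<Lambda> \<and> (\<forall>\<Lambda>'. A_order D \<Lambda>' \<and> \<Lambda> \<subseteq> \<Lambda>' \<longrightarrow> \<Lambda>' = \<Lambda>)"

definition units_of_order :: "'a::{finite,field} mat2 set \<Rightarrow> 'a mat2 set" where
  "units_of_order \<Lambda> = {g\<in>\<Lambda>. \<exists>h\<in>\<Lambda>. g ** h = mat 1 \<and> h ** g = mat 1}"

definition O_lattice :: "'a::field vec2 set \<Rightarrow> bool" where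
  "O_lattice L \<longleftrightarrow> (\<exists>g::'a mat2. invertible g \<and> L = {g *v x | x. \<forall>i. x $ i \<in> O_ring})"

definition scale_set :: "'a::field fls \<Rightarrow> 'a vec2 set \<Rightarrow> 'a vec2 set" where
  "scale_set c L = (\<lambda>x. c *s x) ` L"

definition homothety_class :: "'a::field vec2 set \<Rightarrow> 'a vec2 set set" where
  "homothety_class L = {scale_set c L | c. c \<noteq> 0}"

definition BT_vertex :: "'a::field vec2 set set \<Rightarrow> bool" where
  "BT_vertex V \<longleftrightarrow> (\<exists>L. O_lattice L \<and> V = homothety_class L)"

definition lattice_index :: "'a::field vec2 set \<Rightarrow> 'a vec2 set \<Rightarrow> nat" where
  "lattice_index L L' = card ((\<lambda>x. (\<lambda>y. x + y) ` L') ` L)"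

text \<open>Edges: ordered pairs (V, W) of vertices with representatives L' \<subseteq> L of index q.
  The origin of (V, W) is V.\<close>
definition BT_edge :: "'a::{finite,field} vec2 set set \<Rightarrow> 'a vec2 set set \<Rightarrow> bool" where
  "BT_edge V W \<longleftrightarrow> BT_vertex V \<and> BT_vertex W \<and>
     (\<exists>L\<in>V. \<exists>L'\<in>W. L' \<subseteq> L \<and> lattice_index L L' = CARD('a))"

definition act_vertex :: "'a::field mat2 \<Rightarrow> 'a vec2 set set \<Rightarrow> 'a vec2 set set" where
  "act_vertex g V = (\<lambda>L. (\<lambda>x. g *v x) ` L) ` V"

definition stabilizer :: "'a::field mat2 set \<Rightarrow> 'a vec2 set set \<Rightarrow> 'a mat2 set" where
  "stabilizer \<Gamma> V = {g\<in>\<Gamma>. act_vertex g V = V}"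

end

theory Submission imports Defs "HOL-Algebra.Multiplicative_Group" "HOL-Analysis.Cartesian_Space"
  "HOL-Number_Theory.Residues" begin


lemma O_iff: "x \<in> O_ring \<longleftrightarrow> (\<forall>n<0. fls_nth x n = 0)"
  unfolding O_ring_def
  by (auto intro: fls_subdegree_ge0I)

lemma O_subdeg: "x \<in> O_ring \<Longrightarrow> fls_subdegree x \<ge> 0"
  by (auto simp: O_iff intro: fls_subdegree_ge0I)

lemma O_0 [simp]: "0 \<in> O_ring" and O_1 [simp]: "1 \<in> O_ring"
  by (auto simp: O_iff)

lemma O_const [simp]: "fls_const c \<in> O_ring"
  by (auto simp: O_iff)

lemma O_add [simp]: "x \<in> O_ring \<Longrightarrow> y \<in> O_ring \<Longrightarrow> x + y \<in> O_ring"
  by (auto simp: O_iff)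

lemma O_diff [simp]: "x \<in> O_ring \<Longrightarrow> y \<in> O_ring \<Longrightarrow> x - y \<in> O_ring"
  by (auto simp: O_iff)

lemma O_uminus [simp]: "x \<in> O_ring \<Longrightarrow> - x \<in> O_ring"
  by (auto simp: O_iff)

lemma O_mult [simp]:
  fixes x y :: "'a::field fls"
  shows "x \<in> O_ring \<Longrightarrow> y \<in> O_ring \<Longrightarrow> x * y \<in> O_ring"
proof -
  assume x: "x \<in> O_ring" and y: "y \<in> O_ring"
  show ?thesis
  proof (cases "x = 0 \<or> y = 0")
    case True then show ?thesis by auto
  next
    case False
    have "fls_subdegree x \<ge> 0" "fls_subdegree y \<ge> 0" using x y O_subdeg by auto
    then show ?thesis unfolding O_iff
      by (auto intro!: fls_times_nth_eq0)
  qed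
qed

lemma O_sum [simp]: "(\<And>i. i \<in> A \<Longrightarrow> f i \<in> O_ring) \<Longrightarrow> sum f A \<in> O_ring"
  by (induction A rule: infinite_finite_induct) auto

lemma O_fps: "x \<in> O_ring \<Longrightarrow> x = fps_to_fls (fls_regpart x)"
  using O_subdeg by (metis fls_regpart_to_fls_trivial)

lemma cst_mult:
  fixes x y :: "'a::field fls"
  assumes "x \<in> O_ring" "y \<in> O_ring"
  shows "fls_nth (x * y) 0 = fls_nth x 0 * fls_nth y 0"
proof -
  obtain f g where "x = fps_to_fls f" "y = fps_to_fls g" using O_fps assms by metis
  then show ?thesis by (simp add: fls_times_fps_to_fls[symmetric])
qed

lemma cst_sum: "fls_nth (\<Sum>i\<in>A. f i) 0 = (\<Sum>i\<in>A. fls_nth (f i) 0)"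
  by (induction A rule: infinite_finite_induct) auto

lemma O_inverse:
  fixes x :: "'a::field fls"
  assumes "x \<in> O_ring" "fls_nth (x) 0 \<noteq> 0"
  shows "inverse x \<in> O_ring"
proof -
  have "fls_subdegree x \<le> 0" using assms(2) by (rule fls_subdegree_leI)
  then have "fls_subdegree x = 0" using O_subdeg[OF assms(1)] by simp
  then have "fls_subdegree (inverse x) = 0" by simp
  then show ?thesis by (simp add: O_ring_def)
qed



no_notation fps_nth (infixl \<open>$\<close> 75)

definition Ostd :: "'a::field vec2 set" where "Ostd = {x. \<forall>i. x$i \<in> O_ring}"
definition integ :: "'a::field mat2 \<Rightarrow> bool" where "integ M \<longleftrightarrow> (\<forall>i j. M$i$j \<in> O_ring)"
definition redm :: "'a::field mat2 \<Rightarrow> 'a^2^2" where "redm M = (\<chi> i j. fls_nth (M$i$j) 0)"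
definition redv :: "'a::field vec2 \<Rightarrow> 'a^2" where "redv x = (\<chi> i. fls_nth (x$i) 0)"
definition mpow :: "'b::semiring_1^'n^'n \<Rightarrow> nat \<Rightarrow> 'b^'n^'n" where
  "mpow A n = ((**) A ^^ n) (mat 1)"
definition det2 :: "'b::comm_ring_1^2^2 \<Rightarrow> 'b" where
  "det2 M = M$1$1 * M$2$2 - M$1$2 * M$2$1"
definition adj2 :: "'b::comm_ring_1^2^2 \<Rightarrow> 'b^2^2" where
  "adj2 M = (\<chi> i j. if i = 1 \<and> j = 1 then M$2$2 else if i = 1 \<and> j = 2 then - M$1$2
      else if i = 2 \<and> j = 1 then - M$2$1 else M$1$1)"

lemma mpow_0 [simp]: "mpow A 0 = mat 1" by (simp add: mpow_def)
lemma mpow_Suc: "mpow A (Suc n) = A ** mpow A n" by (simp add: mpow_def)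
lemma mpow_add: "mpow A (m + n) = mpow A m ** mpow A n"
  by (induction m) (simp_all add: mpow_Suc matrix_mul_assoc)
lemma mpow_1 [simp]: "mpow A 1 = A" by (simp add: mpow_Suc)
lemma mpow_Suc': "mpow A (Suc n) = mpow A n ** A"
  by (metis mpow_add mpow_1 Suc_eq_plus1)
lemma mpow_mult: "mpow A (m * n) = mpow (mpow A m) n"
  by (induction n) (simp_all add: mpow_Suc mpow_add)
lemma mpow_mat1 [simp]: "mpow (mat 1) n = mat 1"
  by (induction n) (simp_all add: mpow_Suc)
lemma mpow_comm: "A ** mpow A n = mpow A n ** A"
  by (simp add: mpow_Suc[symmetric] mpow_Suc'[symmetric])

lemma two_ne: "(1::2) \<noteq> 2" by simp

lemma mat_mult_entry: "(mat c ** A) $ i $ j = c * A$i$j"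
  by (simp add: matrix_matrix_mult_def mat_def if_distrib if_distribR cong: if_cong)

lemma matrix_sub_rdistrib:
  fixes A B C :: "'b::ring_1^'n^'n"
  shows "(A - B) ** C = A ** C - B ** C"
  by (simp add: matrix_matrix_mult_def vec_eq_iff sum_subtractf left_diff_distrib)

lemma matrix_sub_ldistrib:
  fixes A B C :: "'b::ring_1^'n^'n"
  shows "C ** (A - B) = C ** A - C ** B"
  by (simp add: matrix_matrix_mult_def vec_eq_iff sum_subtractf right_diff_distrib)

lemma matrix_sum_ldistrib:
  fixes A :: "'b::semiring_1^'n^'n"
  shows "A ** sum f X = sum (\<lambda>x. A ** f x) X"
  by (induction X rule: infinite_finite_induct) (simp_all add: matrix_add_ldistrib)

lemma adj2_right: "M ** adj2 M = mat (det2 M)"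
  by (simp add: vec_eq_iff forall_2 matrix_matrix_mult_def sum_2 mat_def adj2_def det2_def
      algebra_simps)

lemma adj2_left: "adj2 M ** M = mat (det2 M)"
  by (simp add: vec_eq_iff forall_2 matrix_matrix_mult_def sum_2 mat_def adj2_def det2_def
      algebra_simps)

lemma det2_mult: "det2 (A ** B) = det2 A * det2 B"
  by (simp add: matrix_matrix_mult_def sum_2 det2_def algebra_simps)

lemma det2_mat [simp]: "det2 (mat c) = c * c"
  by (simp add: det2_def mat_def)

lemma det2_inverse:
  fixes M :: "'b::field^2^2"
  assumes "det2 M \<noteq> 0"
  shows "M ** (mat (inverse (det2 M)) ** adj2 M) = mat 1"
    "(mat (inverse (det2 M)) ** adj2 M) ** M = mat 1"
proof -
  have e: "mat a ** mat b = (mat (a * b) :: 'b^2^2)" for a b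
    by (simp add: vec_eq_iff mat_mult_entry) (simp add: mat_def)
  have c: "M ** mat a = mat a ** M" for a
    by (simp add: vec_eq_iff forall_2 matrix_matrix_mult_def sum_2 mat_def mult.commute)
  have "M ** (mat (inverse (det2 M)) ** adj2 M) = (M ** mat (inverse (det2 M))) ** adj2 M"
    by (rule matrix_mul_assoc)
  also have "\<dots> = mat (inverse (det2 M)) ** (M ** adj2 M)"
    unfolding c by (rule matrix_mul_assoc[symmetric])
  also have "\<dots> = mat 1" unfolding adj2_right e using assms by simp
  finally show "M ** (mat (inverse (det2 M)) ** adj2 M) = mat 1" .
  have "(mat (inverse (det2 M)) ** adj2 M) ** M = mat (inverse (det2 M)) ** (adj2 M ** M)"
    by (rule matrix_mul_assoc[symmetric])
  also have "\<dots> = mat 1" unfolding adj2_left e using assms by simp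
  finally show "(mat (inverse (det2 M)) ** adj2 M) ** M = mat 1" .
qed

lemma invertible_det2:
  fixes M :: "'b::field^2^2"
  shows "invertible M \<longleftrightarrow> det2 M \<noteq> 0"
proof
  assume "invertible M"
  then obtain M' where "M ** M' = mat 1" by (auto simp: invertible_def)
  then have "det2 M * det2 M' = 1" by (metis det2_mult det2_mat mult_1)
  then show "det2 M \<noteq> 0" by auto
next
  assume "det2 M \<noteq> 0"
  then show "invertible M" unfolding invertible_def using det2_inverse by blast
qed

lemma integ_mult: "integ A \<Longrightarrow> integ B \<Longrightarrow> integ (A ** B)"
  by (simp add: integ_def matrix_matrix_mult_def)

lemma integ_mat1 [simp]: "integ (mat 1)"
  by (simp add: integ_def mat_def)

lemma integ_mpow: "integ A \<Longrightarrow> integ (mpow A n)"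
  by (induction n) (simp_all add: mpow_Suc integ_mult)

lemma integ_diff: "integ A \<Longrightarrow> integ B \<Longrightarrow> integ (A - B)"
  by (simp add: integ_def)

lemma integ_sum: "(\<And>x. x \<in> X \<Longrightarrow> integ (f x)) \<Longrightarrow> integ (sum f X)"
  by (induction X rule: infinite_finite_induct) (auto simp: integ_def)

lemma redm_mult: "integ A \<Longrightarrow> integ B \<Longrightarrow> redm (A ** B) = redm A ** redm B"
  by (simp add: integ_def redm_def matrix_matrix_mult_def vec_eq_iff cst_sum cst_mult)

lemma redm_mat1 [simp]: "redm (mat 1) = mat 1"
  by (simp add: redm_def mat_def vec_eq_iff)

lemma redm_mpow: "integ A \<Longrightarrow> redm (mpow A n) = mpow (redm A) n"
  by (induction n) (simp_all add: mpow_Suc redm_mult integ_mpow)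

lemma redm_sum: "redm (sum f X) = sum (\<lambda>x. redm (f x)) X"
  by (induction X rule: infinite_finite_induct) (simp_all add: redm_def vec_eq_iff)

lemma redm_diff: "redm (A - B) = redm A - redm B"
  by (simp add: redm_def vec_eq_iff)

lemma det2_red: "integ M \<Longrightarrow> fls_nth (det2 M) 0 = det2 (redm M)"
  by (simp add: integ_def det2_def redm_def cst_mult)

lemma integ_det2: "integ M \<Longrightarrow> det2 M \<in> O_ring"
  by (simp add: integ_def det2_def)

lemma Ostd_mult: "integ A \<Longrightarrow> x \<in> Ostd \<Longrightarrow> A *v x \<in> Ostd"
  by (simp add: integ_def Ostd_def matrix_vector_mult_def)

lemma redv_mult: "integ A \<Longrightarrow> x \<in> Ostd \<Longrightarrow> redv (A *v x) = redm A *v redv x"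
  by (simp add: integ_def Ostd_def redv_def redm_def matrix_vector_mult_def vec_eq_iff
      cst_sum cst_mult)

lemma sum_mat_const: "sum (\<lambda>_. mat c) X = (mat (of_nat (card X) * c) :: 'b::semiring_1^'n^'n)"
  by (induction X rule: infinite_finite_induct) (simp_all add: mat_def vec_eq_iff distrib_right)

lemma telescope:
  fixes B :: "'b::ring_1^'n^'n"
  shows "(B - mat 1) ** sum (mpow B) {..<n} = mpow B n - mat 1"
proof -
  have "(B - mat 1) ** sum (mpow B) {..<n} = sum (\<lambda>j. mpow B (Suc j) - mpow B j) {..<n}"
    by (simp add: matrix_sum_ldistrib matrix_sub_rdistrib mpow_Suc)
  also have "\<dots> = mpow B n - mat 1" by (simp add: sum_lessThan_telescope)
  finally show ?thesis .
qed

lemma kernel_red: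
  fixes B :: "'a::field mat2"
  assumes "integ B" "mpow B N = mat 1" "(of_nat N :: 'a) \<noteq> 0" "redm B = mat 1"
  shows "B = mat 1"
proof -
  define S where "S = sum (mpow B) {..<N}"
  have iS: "integ S" unfolding S_def by (intro integ_sum integ_mpow assms)
  have "redm S = sum (\<lambda>j. mpow (redm B) j) {..<N}"
    unfolding S_def redm_sum using redm_mpow[OF assms(1)] by simp
  also have "\<dots> = mat (of_nat N)" using assms(4) by (simp add: sum_mat_const del: sum_constant)
  finally have "det2 (redm S) \<noteq> 0" using assms(3) by simp
  then have "det2 S \<noteq> 0" using det2_red[OF iS] by auto
  then obtain S' where S': "S ** S' = mat 1" using det2_inverse by blast
  have "(B - mat 1) ** S = 0" unfolding S_def telescope using assms(2) by simp
  then have "(B - mat 1) ** S ** S' = 0" by simp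
  then have "B - mat 1 = 0" by (simp add: S' matrix_mul_assoc[symmetric])
  then show ?thesis by simp
qed



definition Alg :: "'b::field^2^2 \<Rightarrow> ('b^2^2) set" where
  "Alg G = (\<lambda>(a,b). mat a ** G + mat b) ` UNIV"

lemma Alg_I: "mat a ** G + mat b \<in> Alg G"
  unfolding Alg_def by auto

lemma Alg_E: "X \<in> Alg G \<Longrightarrow> (\<And>a b. X = mat a ** G + mat b \<Longrightarrow> P) \<Longrightarrow> P"
  unfolding Alg_def by auto

lemma Alg_0: "0 \<in> Alg G"
  using Alg_I[of 0 G 0] by simp

lemma Alg_1: "mat 1 \<in> Alg G"
  using Alg_I[of 0 G 1] by simp

lemma Alg_diff: "X \<in> Alg G \<Longrightarrow> Y \<in> Alg G \<Longrightarrow> X - Y \<in> Alg G"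
proof -
  assume "X \<in> Alg G" "Y \<in> Alg G"
  then obtain a b c d where "X = mat a ** G + mat b" "Y = mat c ** G + mat d"
    by (metis Alg_E)
  moreover have "(mat a ** G + mat b) - (mat c ** G + mat d) = mat (a - c) ** G + mat (b - d)"
    by (simp add: vec_eq_iff mat_mult_entry) (simp add: mat_def algebra_simps)
  ultimately show ?thesis using Alg_I by metis
qed

lemma Alg_mult: "X \<in> Alg G \<Longrightarrow> G ** X \<in> Alg G"
proof -
  assume "X \<in> Alg G"
  then obtain a b where X: "X = mat a ** G + mat b" by (metis Alg_E)
  have "G ** (mat a ** G + mat b) =
     mat (a * (G$1$1 + G$2$2) + b) ** G + mat (- (a * det2 G))"
    by (simp add: vec_eq_iff forall_2 matrix_matrix_mult_def sum_2 mat_def det2_def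
      algebra_simps)
  then show ?thesis using X Alg_I by metis
qed

lemma Alg_mpow: "mpow G k \<in> Alg G"
  by (induction k) (simp_all add: mpow_Suc Alg_1 Alg_mult)

lemma finite_Alg: "finite (Alg (G::'b::{finite,field}^2^2))"
  unfolding Alg_def by simp

lemma card_Alg: "card (Alg (G::'b::{finite,field}^2^2)) \<le> CARD('b) * CARD('b)"
proof -
  have "card (Alg G) \<le> card (UNIV :: ('b \<times> 'b) set)"
    unfolding Alg_def by (rule card_image_le) simp
  then show ?thesis by (metis UNIV_Times_UNIV card_cartesian_product)
qed

lemma card_vec2: "CARD('b::finite^2) \<le> CARD('b) * CARD('b)"
proof -
  have "inj (\<lambda>x::'b^2. (x$1, x$2))"
    by (rule injI) (simp add: vec_eq_iff forall_2)
  then have "card (UNIV::('b^2) set) \<le> card (UNIV :: ('b \<times> 'b) set)"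
    by (rule card_inj_on_le) auto
  then show ?thesis by (metis UNIV_Times_UNIV card_cartesian_product)
qed

lemma mpow_inv:
  assumes "mpow G N = mat 1" "k \<le> N"
  shows "mpow G k ** mpow G (N - k) = mat 1" "mpow G (N - k) ** mpow G k = mat 1"
  using assms by (metis mpow_add le_add_diff_inverse add.commute)+

lemma mat1_ne0: "mat 1 \<noteq> (0 :: 'b::field^2^2)"
  by (simp add: vec_eq_iff mat_def)

theorem alg_transitive:
  fixes G :: "'b::{finite,field}^2^2"
  assumes N: "N = CARD('b) * CARD('b) - 1"
    and GN: "mpow G N = mat 1"
    and Gd: "\<And>d. 0 < d \<Longrightarrow> d < N \<Longrightarrow> mpow G d \<noteq> mat 1"
    and u: "u \<noteq> 0" and w: "w \<noteq> 0"
  shows "\<exists>k<N. mpow G k *v u = w"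
proof -
  let ?q = "CARD('b)"
  have q2: "?q \<ge> 2"
  proof -
    have "card {0::'b, 1} \<le> ?q" by (rule card_mono) auto
    then show ?thesis by simp
  qed
  then have qq: "?q * ?q \<ge> 4" using mult_le_mono by fastforce
  define Pw where "Pw = mpow G ` {..<N}"
  have inj: "inj_on (mpow G) {..<N}"
  proof (rule inj_onI, rule ccontr)
    fix a b assume a: "a \<in> {..<N}" and b: "b \<in> {..<N}" and e: "mpow G a = mpow G b" and ne: "a \<noteq> b"
    have *: "mpow G (y - x) = mat 1" if "x < y" "y < N" "mpow G x = mpow G y" for x y
    proof -
      have e1: "mpow G (y - x) ** mpow G x = mpow G y"
        using mpow_add[of G "y - x" x] that by simp
      have "mpow G (y - x) = mpow G (y - x) ** (mpow G x ** mpow G (N - x))"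
        using mpow_inv(1)[OF GN, of x] that by simp
      also have "\<dots> = (mpow G (y - x) ** mpow G x) ** mpow G (N - x)"
        by (simp add: matrix_mul_assoc)
      also have "\<dots> = mpow G x ** mpow G (N - x)" using e1 that by simp
      also have "\<dots> = mat 1" using mpow_inv(1)[OF GN, of x] that by simp
      finally show ?thesis .
    qed
    show False
    proof (cases "a < b")
      case True then show False using *[of a b] Gd[of "b - a"] a b e by auto
    next
      case False then have "b < a" using ne by simp
      then show False using *[of b a] Gd[of "a - b"] a b e by auto
    qed
  qed
  have cPw: "card Pw = N" unfolding Pw_def using card_image[OF inj] by simp
  have Pw0: "0 \<notin> Pw"
  proof
    assume "0 \<in> Pw"
    then obtain k where "k < N" "mpow G k = 0" unfolding Pw_def by auto
    then show False using mpow_inv(1)[OF GN, of k] mat1_ne0[where 'b='b] by simp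
  qed
  have PwA: "Pw \<subseteq> Alg G - {0}" unfolding Pw_def using Alg_mpow Pw0 Pw_def by auto
  have cA: "card (Alg G - {0}) \<le> N"
    using card_Alg[of G] Alg_0[of G] finite_Alg[of G] N by (simp add: card_Diff_singleton)
  have eqA: "Pw = Alg G - {0}"
  proof (rule card_subset_eq)
    show fin: "finite (Alg G - {0})" using finite_Alg by auto
    show "Pw \<subseteq> Alg G - {0}" by (rule PwA)
    show "card Pw = card (Alg G - {0})" using card_mono[OF fin PwA] cA cPw by simp
  qed
  have cAlg: "card (Alg G) = ?q * ?q"
  proof -
    have "card (Alg G - {0}) = N" using eqA cPw by simp
    then show ?thesis using Alg_0[of G] finite_Alg[of G] N qq
      by (simp add: card_Diff_singleton)
  qed
  have injA: "inj_on (\<lambda>X. X *v u) (Alg G)"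
  proof (rule inj_onI, rule ccontr)
    fix X Y assume X: "X \<in> Alg G" and Y: "Y \<in> Alg G" and e: "X *v u = Y *v u" and ne: "X \<noteq> Y"
    have "X - Y \<in> Pw" using Alg_diff[OF X Y] ne eqA by auto
    then obtain k where k: "k < N" "X - Y = mpow G k" unfolding Pw_def by auto
    have "(X - Y) *v u = 0" using e by (simp add: matrix_vector_mult_diff_rdistrib)
    then have "mpow G (N - k) *v (mpow G k *v u) = 0" using k by simp
    then have "u = 0" using mpow_inv(2)[OF GN, of k] k by (simp add: matrix_vector_mul_assoc)
    then show False using u by simp
  qed
  have "card ((\<lambda>X. X *v u) ` Alg G) = ?q * ?q" using card_image[OF injA] cAlg by simp
  then have "(\<lambda>X. X *v u) ` Alg G = UNIV"
    using card_vec2[where 'b='b] by (intro card_subset_eq) (auto simp: power2_eq_square)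
  then obtain X where X: "X \<in> Alg G" "X *v u = w" by (metis UNIV_I imageE)
  then have "X \<noteq> 0" using w by auto
  then have "X \<in> Pw" using X eqA by auto
  then show ?thesis using X unfolding Pw_def by auto
qed



definition Pl :: "'a::field^2 \<Rightarrow> 'a vec2 set" where
  "Pl x = {y \<in> Ostd. \<exists>t. redv y = t *s x}"

lemma mv_smult: "(M::'b::comm_semiring_1^'n^'m) *v (t *s x) = t *s (M *v x)"
  by (simp add: vec_eq_iff matrix_vector_mult_def sum_distrib_left algebra_simps)

lemma Pl_map:
  fixes A :: "'a::field mat2"
  assumes "integ A" "redm A *v x1 = x2"
  shows "(\<lambda>y. A *v y) ` Pl x1 \<subseteq> Pl x2"
proof
  fix z assume "z \<in> (\<lambda>y. A *v y) ` Pl x1"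
  then obtain y t where y: "y \<in> Ostd" "redv y = t *s x1" "z = A *v y" unfolding Pl_def by auto
  have "z \<in> Ostd" using y Ostd_mult assms(1) by simp
  moreover have "redv z = t *s x2" using y redv_mult[OF assms(1) y(1)] assms(2) by (simp add: mv_smult)
  ultimately show "z \<in> Pl x2" unfolding Pl_def by auto
qed

lemma of_nat_card_field: "(of_nat CARD('a::{finite,field}) :: 'a) = 0"
  using CHAR_dvd_CARD[where 'a='a] of_nat_eq_0_iff_char_dvd by blast

lemma core_transitive:
  fixes g :: "'a::{finite,field} mat2"
  assumes ig: "integ g" and gN: "mpow g N = mat 1" and N: "N = CARD('a) * CARD('a) - 1"
    and gd: "\<And>d. 0 < d \<Longrightarrow> d < N \<Longrightarrow> mpow g d \<noteq> mat 1"
    and x1: "x1 \<noteq> 0" and x2: "x2 \<noteq> 0"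
  shows "\<exists>k. (\<lambda>y. mpow g k *v y) ` Pl x1 = Pl x2"
proof -
  define G where "G = redm g"
  have GN: "mpow G N = mat 1" unfolding G_def using redm_mpow[OF ig, of N] gN by simp
  have q1: "CARD('a) \<ge> 1" by (simp add: Suc_leI)
  then have qq: "CARD('a) * CARD('a) \<ge> 1" by simp
  have Nne: "(of_nat N :: 'a) \<noteq> 0"
  proof -
    have "(of_nat N :: 'a) = of_nat (CARD('a) * CARD('a)) - 1"
      using N qq by (simp add: of_nat_diff)
    also have "\<dots> = -1" using of_nat_card_field[where 'a='a] by simp
    finally show ?thesis by simp
  qed
  have Gd: "mpow G d \<noteq> mat 1" if d: "0 < d" "d < N" for d
  proof
    assume a: "mpow G d = mat 1"
    have "mpow (mpow g d) N = mat 1"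
      using gN by (metis mpow_mult mult.commute mpow_mat1)
    moreover have "redm (mpow g d) = mat 1" using a redm_mpow[OF ig, of d] G_def by simp
    ultimately have "mpow g d = mat 1" using kernel_red[OF integ_mpow[OF ig] _ Nne] by blast
    then show False using gd d by blast
  qed
  obtain k where k: "k < N" "mpow G k *v x1 = x2"
    using alg_transitive[OF N GN Gd x1 x2] by blast
  have k2: "mpow G (N - k) *v x2 = x1"
    using k mpow_inv(2)[OF GN, of k] by (metis matrix_vector_mul_assoc matrix_vector_mul_lid less_imp_le)
  have s1: "(\<lambda>y. mpow g k *v y) ` Pl x1 \<subseteq> Pl x2"
    by (rule Pl_map) (use ig k G_def redm_mpow[OF ig] integ_mpow[OF ig] in auto)
  have s2: "(\<lambda>y. mpow g (N - k) *v y) ` Pl x2 \<subseteq> Pl x1"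
    by (rule Pl_map) (use ig k2 G_def redm_mpow[OF ig] integ_mpow[OF ig] in auto)
  have "Pl x2 \<subseteq> (\<lambda>y. mpow g k *v y) ` Pl x1"
  proof
    fix z assume z: "z \<in> Pl x2"
    have "mpow g k *v (mpow g (N - k) *v z) = z"
      using mpow_inv(1)[OF gN, of k] k by (simp add: matrix_vector_mul_assoc)
    then show "z \<in> (\<lambda>y. mpow g k *v y) ` Pl x1" using s2 z by (metis image_eqI image_subset_iff)
  qed
  then show ?thesis using s1 by blast
qed



definition coset :: "'c::ab_group_add set \<Rightarrow> 'c \<Rightarrow> 'c set" where
  "coset H a = (\<lambda>y. a + y) ` H"

lemma lattice_index_coset: "lattice_index U H = card (coset H ` U)"
  unfolding lattice_index_def coset_def ..

definition subgrp :: "'c::ab_group_add set \<Rightarrow> bool" where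
  "subgrp H \<longleftrightarrow> 0 \<in> H \<and> (\<forall>x\<in>H. \<forall>y\<in>H. x + y \<in> H \<and> x - y \<in> H)"

lemma coset_eq:
  assumes "subgrp H"
  shows "coset H a = coset H b \<longleftrightarrow> a - b \<in> H"
proof
  assume e: "coset H a = coset H b"
  have "a \<in> coset H a" using assms unfolding subgrp_def coset_def by force
  then obtain y where "y \<in> H" "a = b + y" using e unfolding coset_def by auto
  then show "a - b \<in> H" by simp
next
  assume d: "a - b \<in> H"
  have "a + y \<in> coset H b" if "y \<in> H" for y
  proof -
    have "(a - b) + y \<in> H" using assms d that unfolding subgrp_def by blast
    then show ?thesis unfolding coset_def by (rule rev_image_eqI) simp
  qed
  moreover have "b + y \<in> coset H a" if "y \<in> H" for y
  proof -
    have "y - (a - b) \<in> H" using assms d that unfolding subgrp_def by blast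
    then show ?thesis unfolding coset_def by (rule rev_image_eqI) simp
  qed
  ultimately show "coset H a = coset H b" unfolding coset_def by blast
qed

lemma index_strict:
  assumes H1: "subgrp H1" and H2: "subgrp H2" and sub: "H1 \<subseteq> H2" "H2 \<subseteq> U"
    and ne: "H1 \<noteq> H2" and fin: "finite (coset H1 ` U)"
  shows "card (coset H2 ` U) < card (coset H1 ` U)"
proof -
  define \<theta> where "\<theta> C = coset H2 (SOME a. a \<in> C)" for C
  have th: "\<theta> (coset H1 a) = coset H2 a" for a
  proof -
    have "a \<in> coset H1 a" using H1 unfolding subgrp_def coset_def by force
    then have s: "(SOME b. b \<in> coset H1 a) \<in> coset H1 a" by (rule someI)
    then have "(SOME b. b \<in> coset H1 a) - a \<in> H1" unfolding coset_def by auto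
    then have "(SOME b. b \<in> coset H1 a) - a \<in> H2" using sub by auto
    then show ?thesis unfolding \<theta>_def using coset_eq[OF H2] by blast
  qed
  have img: "coset H2 ` U = \<theta> ` (coset H1 ` U)"
    by (simp add: image_image th)
  obtain y where y: "y \<in> H2" "y \<notin> H1" using sub ne by blast
  have z: "0 \<in> H2" using H2 unfolding subgrp_def by auto
  have ninj: "\<not> inj_on \<theta> (coset H1 ` U)"
  proof
    assume i: "inj_on \<theta> (coset H1 ` U)"
    have "\<theta> (coset H1 y) = \<theta> (coset H1 0)" unfolding th using coset_eq[OF H2] y z by simp
    moreover have yU: "y \<in> U" "0 \<in> U" using y z sub by auto
    ultimately have "coset H1 y = coset H1 0"
      using inj_onD[OF i _ imageI[OF yU(1)] imageI[OF yU(2)]] by blast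
    then show False using coset_eq[OF H1] y by simp
  qed
  have "card (\<theta> ` (coset H1 ` U)) \<le> card (coset H1 ` U)" by (rule card_image_le[OF fin])
  moreover have "card (\<theta> ` (coset H1 ` U)) \<noteq> card (coset H1 ` U)"
    using ninj inj_on_iff_eq_card[OF fin] by blast
  ultimately show ?thesis using img by simp
qed

lemma index_transport:
  fixes f :: "'a::field vec2 \<Rightarrow> 'a vec2"
  assumes add: "\<And>x y. f (x + y) = f x + f y" and inj: "inj f"
  shows "lattice_index (f ` U) (f ` M) = lattice_index U M"
proof -
  have c: "coset (f ` M) (f a) = f ` coset M a" for a
    unfolding coset_def image_image add ..
  have "coset (f ` M) ` (f ` U) = (\<lambda>C. f ` C) ` (coset M ` U)"
    by (simp add: image_image c)
  moreover have "inj_on (\<lambda>C. f ` C) (coset M ` U)"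
    by (rule inj_onI) (simp add: inj_image_eq_iff[OF inj])
  ultimately show ?thesis unfolding lattice_index_coset by (simp add: card_image)
qed

lemma redv_add [simp]: "redv (x + y) = redv x + redv y"
  by (simp add: redv_def vec_eq_iff)
lemma redv_diff [simp]: "redv (x - y) = redv x - redv y"
  by (simp add: redv_def vec_eq_iff)
lemma redv_0 [simp]: "redv 0 = 0"
  by (simp add: redv_def vec_eq_iff)

lemma Ostd_add [simp]: "x \<in> Ostd \<Longrightarrow> y \<in> Ostd \<Longrightarrow> x + y \<in> Ostd"
  and Ostd_diff [simp]: "x \<in> Ostd \<Longrightarrow> y \<in> Ostd \<Longrightarrow> x - y \<in> Ostd"
  and Ostd_0 [simp]: "0 \<in> Ostd"
  by (auto simp: Ostd_def)

lemma subgrp_Ostd: "subgrp Ostd"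
  by (simp add: subgrp_def)

lemma subgrp_Pl: "subgrp (Pl x)"
  unfolding subgrp_def
proof (intro conjI ballI)
  show "0 \<in> Pl x" unfolding Pl_def by (auto intro: exI[of _ 0])
  fix u v assume "u \<in> Pl x" "v \<in> Pl x"
  then obtain a b where ab: "u \<in> Ostd" "v \<in> Ostd" "redv u = a *s x" "redv v = b *s x"
    unfolding Pl_def by auto
  show "u + v \<in> Pl x" unfolding Pl_def
    using ab by (auto intro!: exI[of _ "a + b"] simp: vector_sadd_rdistrib)
  show "u - v \<in> Pl x" unfolding Pl_def
    using ab by (auto intro!: exI[of _ "a - b"] simp: vector_sub_rdistrib)
qed

definition liftv :: "'a::field^2 \<Rightarrow> 'a vec2" where
  "liftv u = (\<chi> i. fls_const (u$i))"

lemma liftv_Ostd [simp]: "liftv u \<in> Ostd" by (simp add: liftv_def Ostd_def)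
lemma redv_liftv [simp]: "redv (liftv u) = u" by (simp add: liftv_def redv_def vec_eq_iff)

lemma decomp2:
  fixes x :: "'a::field^2"
  assumes "x \<noteq> 0"
  obtains z where "\<And>u. \<exists>a t. u = a *s x + t *s z" "\<And>a t. t *s z = a *s x \<Longrightarrow> t = 0"
proof (cases "x$1 = 0")
  case False
  let ?z = "(\<chi> i. if i = 1 then 0 else 1) :: 'a^2"
  show ?thesis
  proof (rule that[of ?z])
    fix u :: "'a^2"
    show "\<exists>a t. u = a *s x + t *s ?z"
      by (rule exI[of _ "u$1 / x$1"], rule exI[of _ "u$2 - u$1 * x$2 / x$1"])
         (use False in \<open>simp add: vec_eq_iff forall_2\<close>)
  next
    fix a t assume "t *s ?z = a *s x"
    then have "a * x$1 = 0" "t = a * x$2" by (simp_all add: vec_eq_iff forall_2)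
    then show "t = 0" using False by simp
  qed
next
  case True
  then have x2: "x$2 \<noteq> 0" using assms by (simp add: vec_eq_iff forall_2)
  let ?z = "(\<chi> i. if i = 1 then 1 else 0) :: 'a^2"
  show ?thesis
  proof (rule that[of ?z])
    fix u :: "'a^2"
    show "\<exists>a t. u = a *s x + t *s ?z"
      by (rule exI[of _ "u$2 / x$2"], rule exI[of _ "u$1"])
         (use True x2 in \<open>simp add: vec_eq_iff forall_2\<close>)
  next
    fix a t assume "t *s ?z = a *s x"
    then have "t = a * x$1" "a * x$2 = 0" by (simp_all add: vec_eq_iff forall_2)
    then show "t = 0" using True x2 by simp
  qed
qed

lemma index_Pl:
  fixes x :: "'a::{finite,field}^2"
  assumes "x \<noteq> 0"
  shows "lattice_index Ostd (Pl x) = CARD('a)"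
proof -
  obtain z where z1: "\<And>u. \<exists>a t. u = a *s x + t *s z"
    and z2: "\<And>a t. t *s z = a *s x \<Longrightarrow> t = 0" using decomp2[OF assms] by blast
  define F where "F t = coset (Pl x) (liftv (t *s z))" for t :: 'a
  have "coset (Pl x) ` Ostd = F ` UNIV"
  proof (intro equalityI subsetI)
    fix C assume "C \<in> coset (Pl x) ` Ostd"
    then obtain y where y: "y \<in> Ostd" "C = coset (Pl x) y" by auto
    obtain a t where at: "redv y = a *s x + t *s z" using z1 by blast
    have "y - liftv (t *s z) \<in> Pl x" using y at unfolding Pl_def by auto
    then have "C = F t" unfolding F_def y(2) using coset_eq[OF subgrp_Pl] by blast
    then show "C \<in> F ` UNIV" by simp
  next
    fix C assume "C \<in> F ` UNIV"
    then show "C \<in> coset (Pl x) ` Ostd" unfolding F_def by auto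
  qed
  moreover have "inj F"
  proof (rule injI)
    fix t t' assume "F t = F t'"
    then have "liftv (t *s z) - liftv (t' *s z) \<in> Pl x"
      unfolding F_def using coset_eq[OF subgrp_Pl] by blast
    then obtain a where "t *s z - t' *s z = a *s x" unfolding Pl_def by auto
    then have "(t - t') *s z = a *s x" by (simp add: vector_sub_rdistrib)
    then show "t = t'" using z2 by fastforce
  qed
  ultimately show ?thesis unfolding lattice_index_coset by (simp add: card_image)
qed

lemma index_self: "lattice_index Ostd (Ostd :: 'a::field vec2 set) = 1"
proof -
  have e: "coset Ostd a = coset Ostd (0::'a vec2)" if "a \<in> (Ostd :: 'a vec2 set)" for a
    using coset_eq[OF subgrp_Ostd, of a 0] that by simp
  have "coset Ostd ` (Ostd :: 'a vec2 set) = {coset Ostd (0::'a vec2)}"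
  proof (intro equalityI subsetI)
    fix C assume "C \<in> coset Ostd ` (Ostd :: 'a vec2 set)"
    then obtain a where "a \<in> (Ostd :: 'a vec2 set)" "C = coset Ostd a" by blast
    then show "C \<in> {coset Ostd (0::'a vec2)}" using e by blast
  next
    fix C assume "C \<in> {coset Ostd (0::'a vec2)}"
    then show "C \<in> coset Ostd ` (Ostd :: 'a vec2 set)" using Ostd_0 by blast
  qed
  then show ?thesis unfolding lattice_index_coset by simp
qed



lemma vec2_eq: "(u::'b^2) = w \<longleftrightarrow> u$1 = w$1 \<and> u$2 = w$2"
  by (simp add: vec_eq_iff forall_2)

lemma mv_comp: "((R::'b::semiring_1^2^2) *v z) $ i = R$i$1 * z$1 + R$i$2 * z$2"
  by (simp add: matrix_vector_mult_def sum_2)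

definition v2 :: "'b \<Rightarrow> 'b \<Rightarrow> 'b^2" where "v2 a b = (\<chi> i. if i = 1 then a else b)"
lemma v2_1 [simp]: "v2 a b $ 1 = a" and v2_2 [simp]: "v2 a b $ 2 = b"
  by (simp_all add: v2_def)
lemma v2_ne0: "v2 a b \<noteq> (0::'b::zero^2) \<longleftrightarrow> a \<noteq> 0 \<or> b \<noteq> 0"
  by (simp add: vec2_eq)

lemma rank1:
  fixes R :: "'a::field^2^2"
  assumes "det2 R = 0"
  shows "\<exists>x. x \<noteq> 0 \<and> (\<forall>z. \<exists>t. R *v z = t *s x)"
proof -
  have d: "R$1$1 * R$2$2 = R$1$2 * R$2$1" using assms by (simp add: det2_def)
  show ?thesis
  proof (cases "R$1$1 \<noteq> 0")
    case True
    have r22: "R$2$2 = R$1$2 * R$2$1 / R$1$1" using d True by (simp add: field_simps)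
    have "R *v z = (z$1 + R$1$2 * z$2 / R$1$1) *s v2 (R$1$1) (R$2$1)" for z
      unfolding vec2_eq mv_comp vector_smult_component v2_1 v2_2 r22
      using True by (simp add: field_simps)
    moreover have "v2 (R$1$1) (R$2$1) \<noteq> 0" using True v2_ne0 by blast
    ultimately show ?thesis by blast
  next
    case F1: False
    show ?thesis
    proof (cases "R$2$1 \<noteq> 0")
      case True
      then have r12: "R$1$2 = 0" using d F1 by simp
      have "R *v z = (z$1 + R$2$2 * z$2 / R$2$1) *s v2 0 (R$2$1)" for z
        unfolding vec2_eq mv_comp vector_smult_component v2_1 v2_2 r12
        using True F1 by (simp add: field_simps)
      moreover have "v2 0 (R$2$1) \<noteq> 0" using True v2_ne0 by blast
      ultimately show ?thesis by blast
    next
      case F2: False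
      show ?thesis
      proof (cases "R$1$2 \<noteq> 0 \<or> R$2$2 \<noteq> 0")
        case True
        have "R *v z = z$2 *s v2 (R$1$2) (R$2$2)" for z
          unfolding vec2_eq mv_comp vector_smult_component v2_1 v2_2
          using F1 F2 by (simp add: mult.commute)
        moreover have "v2 (R$1$2) (R$2$2) \<noteq> 0" using True v2_ne0 by blast
        ultimately show ?thesis by blast
      next
        case False
        have "R *v z = 0 *s v2 1 0" for z
          unfolding vec2_eq mv_comp vector_smult_component v2_1 v2_2
          using F1 F2 False by simp
        moreover have "v2 (1::'a) 0 \<noteq> 0" by (simp add: v2_ne0)
        ultimately show ?thesis by blast
      qed
    qed
  qed
qed

lemma integ_cols:
  assumes "\<And>y. y \<in> Ostd \<Longrightarrow> A *v y \<in> Ostd"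
  shows "integ A"
  unfolding integ_def
proof (intro allI)
  fix i j
  define e where "e = ((\<chi> k. if k = j then 1 else 0) :: 'a::field vec2)"
  have "e \<in> Ostd" unfolding Ostd_def e_def by simp
  then have "A *v e \<in> Ostd" by (rule assms)
  then have m: "(A *v e) $ i \<in> O_ring" unfolding Ostd_def by blast
  have "(A *v e) $ i = A$i$j"
  proof (cases "j = 1")
    case True
    then have "e $ 1 = 1" "e $ 2 = 0" unfolding e_def by simp_all
    then show ?thesis unfolding mv_comp using True by simp
  next
    case False
    then have j: "j = 2" using exhaust_2 by blast
    then have "e $ 1 = 0" "e $ 2 = 1" unfolding e_def by simp_all
    then show ?thesis unfolding mv_comp using j by simp
  qed
  then show "A$i$j \<in> O_ring" using m by simp
qed

lemma classify:
  fixes g1 :: "'a::{finite,field} mat2"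
  assumes sub: "(\<lambda>y. g1 *v y) ` Ostd \<subseteq> Ostd"
    and idx: "lattice_index Ostd ((\<lambda>y. g1 *v y) ` Ostd) = CARD('a)"
  shows "\<exists>x. x \<noteq> 0 \<and> (\<lambda>y. g1 *v y) ` Ostd = Pl x"
proof -
  let ?M = "(\<lambda>y. g1 *v y) ` Ostd"
  have ig: "integ g1" using sub by (intro integ_cols) auto
  have q2: "CARD('a) \<ge> 2"
  proof -
    have "card {0::'a, 1} \<le> CARD('a)" by (rule card_mono) auto
    then show ?thesis by simp
  qed
  show ?thesis
  proof (cases "det2 (redm g1) = 0")
    case False
    define d where "d = det2 g1"
    have "fls_nth d 0 \<noteq> 0" using False det2_red[OF ig] d_def by simp
    then have di: "inverse d \<in> O_ring" using O_inverse integ_det2[OF ig] d_def by blast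
    then have d0: "d \<noteq> 0" using \<open>fls_nth d 0 \<noteq> 0\<close> by auto
    define gi where "gi = mat (inverse d) ** adj2 g1"
    have adjO: "adj2 g1 $ i $ j \<in> O_ring" for i j
      using ig unfolding integ_def adj2_def by simp
    have igi: "integ gi"
      unfolding integ_def gi_def mat_mult_entry using di adjO by simp
    have "g1 ** gi = mat 1" using det2_inverse(1)[of g1] d0 unfolding gi_def d_def by simp
    then have "Ostd \<subseteq> ?M"
    proof -
      assume e: "g1 ** gi = mat 1"
      show "Ostd \<subseteq> ?M"
      proof
        fix y :: "'a vec2" assume y: "y \<in> Ostd"
        show "y \<in> ?M"
          by (rule rev_image_eqI[of "gi *v y"]) (simp_all add: Ostd_mult[OF igi y] matrix_vector_mul_assoc e)
      qed
    qed
    then have "?M = Ostd" using sub by blast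
    then have "CARD('a) = 1" using idx index_self[where 'a='a] by simp
    then show ?thesis using q2 by simp
  next
    case True
    obtain x where x: "x \<noteq> 0" "\<And>z. \<exists>t. redm g1 *v z = t *s x" using rank1[OF True] by blast
    have MP: "?M \<subseteq> Pl x"
    proof
      fix y assume "y \<in> ?M"
      then obtain z where z: "z \<in> Ostd" "y = g1 *v z" by blast
      obtain t where t: "redm g1 *v redv z = t *s x" using x by blast
      have "y \<in> Ostd" using z Ostd_mult[OF ig] by simp
      moreover have "redv y = t *s x" using z redv_mult[OF ig z(1)] t by simp
      ultimately show "y \<in> Pl x" unfolding Pl_def by blast
    qed
    have sgM: "subgrp ?M"
      unfolding subgrp_def
    proof (intro conjI ballI)
      show "0 \<in> ?M" by (rule rev_image_eqI[of 0]) simp_all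
      fix u v assume "u \<in> ?M" "v \<in> ?M"
      then obtain a b where ab: "a \<in> Ostd" "b \<in> Ostd" "u = g1 *v a" "v = g1 *v b" by blast
      show "u + v \<in> ?M"
        by (rule rev_image_eqI[of "a + b"]) (simp_all add: ab matrix_vector_right_distrib)
      show "u - v \<in> ?M"
        by (rule rev_image_eqI[of "a - b"]) (simp_all add: ab matrix_vector_mult_diff_distrib)
    qed
    have PO: "Pl x \<subseteq> Ostd" unfolding Pl_def by auto
    have idx': "card (coset ?M ` Ostd) = CARD('a)" using idx unfolding lattice_index_coset .
    have fin: "finite (coset ?M ` Ostd)"
    proof (rule ccontr)
      assume "infinite (coset ?M ` Ostd)"
      then have "card (coset ?M ` Ostd) = 0" by (rule card.infinite)
      then show False using idx' q2 by simp
    qed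
    show ?thesis
    proof (cases "?M = Pl x")
      case True then show ?thesis using x by blast
    next
      case False
      have "card (coset (Pl x) ` Ostd) < card (coset ?M ` Ostd)"
        by (rule index_strict[OF sgM subgrp_Pl MP PO False fin])
      moreover have "card (coset (Pl x) ` Ostd) = CARD('a)"
        using index_Pl[OF x(1)] unfolding lattice_index_coset .
      ultimately show ?thesis using idx' by simp
    qed
  qed
qed



lemma smat_mv: "(mat c ** (A::'b::comm_ring_1^'n^'m)) *v y = c *s (A *v y)"
  by (simp add: vec_eq_iff matrix_vector_mult_def mat_mult_entry sum_distrib_left mult.assoc)

lemma scale_image: "scale_set c ((\<lambda>y. A *v y) ` U) = (\<lambda>y. (mat c ** A) *v y) ` U"
  unfolding scale_set_def image_image by (rule image_cong[OF refl]) (simp add: smat_mv)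

lemma scale_scale: "scale_set a (scale_set b L) = scale_set (a * b) L"
  unfolding scale_set_def image_image by (rule image_cong[OF refl]) (simp add: vector_smult_assoc)

lemma scale_1: "scale_set 1 L = L"
  unfolding scale_set_def by simp

lemma hc_scale:
  assumes "s \<noteq> 0"
  shows "homothety_class (scale_set s L) = homothety_class L"
proof (intro equalityI subsetI)
  fix X assume "X \<in> homothety_class (scale_set s L)"
  then obtain c where "c \<noteq> 0" "X = scale_set c (scale_set s L)" unfolding homothety_class_def by blast
  then show "X \<in> homothety_class L" unfolding homothety_class_def scale_scale using assms by auto
next
  fix X assume "X \<in> homothety_class L"
  then obtain c where c: "c \<noteq> 0" "X = scale_set c L" unfolding homothety_class_def by blast
  then have "X = scale_set (c / s) (scale_set s L)" unfolding scale_scale using assms by simp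
  moreover have "c / s \<noteq> 0" using c assms by simp
  ultimately show "X \<in> homothety_class (scale_set s L)" unfolding homothety_class_def by blast
qed

lemma hc_mem:
  assumes "L' \<in> homothety_class L"
  shows "homothety_class L' = homothety_class L"
  using assms hc_scale unfolding homothety_class_def by blast

lemma act_hc:
  "act_vertex A (homothety_class L) = homothety_class ((\<lambda>y. A *v y) ` L)"
proof -
  have e: "(\<lambda>y. A *v y) ` scale_set c L = scale_set c ((\<lambda>y. A *v y) ` L)" for c
    unfolding scale_set_def image_image by (rule image_cong[OF refl]) (simp add: mv_smult)
  show ?thesis unfolding act_vertex_def homothety_class_def
    using e by blast
qed

lemma Olat:
  fixes L :: "'a::field vec2 set"
  assumes "O_lattice L"
  shows "\<exists>h::'a mat2. invertible h \<and> L = (\<lambda>y. h *v y) ` Ostd"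
proof -
  obtain h :: "'a mat2" where "invertible h" "L = {h *v x | x. \<forall>i. x $ i \<in> O_ring}"
    using assms unfolding O_lattice_def by blast
  moreover have "{h *v x | x. \<forall>i. x $ i \<in> O_ring} = (\<lambda>y. h *v y) ` Ostd"
    unfolding Ostd_def by blast
  ultimately show ?thesis by blast
qed

lemma invertible_smat:
  fixes h :: "'a::field mat2"
  assumes "invertible h" "c \<noteq> 0"
  shows "invertible (mat c ** h)"
  using assms unfolding invertible_det2 det2_mult det2_mat by simp

lemma edge_class:
  fixes h :: "'a::{finite,field} mat2"
  assumes h: "invertible h" and e: "BT_edge (homothety_class ((\<lambda>y. h *v y) ` Ostd)) w"
  shows "\<exists>c x. c \<noteq> 0 \<and> x \<noteq> 0 \<and> w = homothety_class ((\<lambda>y. (mat c ** h) *v y) ` Pl x)"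
proof -
  obtain L L' where L: "L \<in> homothety_class ((\<lambda>y. h *v y) ` Ostd)" and L': "L' \<in> w"
    and sub: "L' \<subseteq> L" and idx: "lattice_index L L' = CARD('a)" and wv: "BT_vertex w"
    using e unfolding BT_edge_def by blast
  obtain c where c: "c \<noteq> 0" "L = scale_set c ((\<lambda>y. h *v y) ` Ostd)"
    using L unfolding homothety_class_def by blast
  define H where "H = mat c ** h"
  have LH: "L = (\<lambda>y. H *v y) ` Ostd" unfolding c(2) H_def scale_image ..
  have iH: "invertible H" unfolding H_def by (rule invertible_smat[OF h c(1)])
  obtain L1 where L1: "O_lattice L1" "w = homothety_class L1" using wv unfolding BT_vertex_def by blast
  obtain g2 :: "'a mat2" where g2: "invertible g2" "L1 = (\<lambda>y. g2 *v y) ` Ostd" using Olat[OF L1(1)] by blast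
  obtain s where s: "s \<noteq> 0" "L' = scale_set s L1" using L' L1(2) unfolding homothety_class_def by blast
  define H2 where "H2 = mat s ** g2"
  have L'H: "L' = (\<lambda>y. H2 *v y) ` Ostd" unfolding s(2) g2(2) H2_def scale_image ..
  have wL': "w = homothety_class L'" using hc_mem L' L1(2) by metis
  obtain Hi where Hi: "H ** Hi = mat 1" "Hi ** H = mat 1" using iH unfolding invertible_def by blast
  define g1 where "g1 = Hi ** H2"
  define M where "M = (\<lambda>y. g1 *v y) ` Ostd"
  have HM: "(\<lambda>y. H *v y) ` M = L'"
    unfolding M_def L'H image_image g1_def matrix_vector_mul_assoc matrix_mul_assoc Hi(1) by simp
  have MO: "M \<subseteq> Ostd"
  proof
    fix u assume "u \<in> M"
    then obtain y where y: "y \<in> Ostd" "u = g1 *v y" unfolding M_def by blast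
    have "H2 *v y \<in> L" using sub L'H y by blast
    then obtain z where z: "z \<in> Ostd" "H2 *v y = H *v z" unfolding LH by blast
    have "u = Hi *v (H *v z)" using y z unfolding g1_def by (metis matrix_vector_mul_assoc)
    also have "\<dots> = z" by (simp add: matrix_vector_mul_assoc Hi(2))
    finally show "u \<in> Ostd" using z by simp
  qed
  have "lattice_index ((\<lambda>y. H *v y) ` Ostd) ((\<lambda>y. H *v y) ` M) = lattice_index Ostd M"
    by (rule index_transport) (simp_all add: matrix_vector_right_distrib inj_matrix_vector_mult[OF iH])
  then have idxM: "lattice_index Ostd M = CARD('a)" using idx LH HM by simp
  obtain x where x: "x \<noteq> 0" "M = Pl x"
    using classify[of g1] MO idxM unfolding M_def by blast
  show ?thesis using c(1) x wL' HM unfolding H_def by blast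
qed



lemma act_vertex_1: "act_vertex (mat 1) V = V"
  unfolding act_vertex_def by simp

lemma act_vertex_mult: "act_vertex (A ** B) V = act_vertex A (act_vertex B V)"
  unfolding act_vertex_def image_image
  by (rule image_cong[OF refl]) (simp add: image_image matrix_vector_mul_assoc)

lemma stab_facts:
  fixes D \<Lambda> :: "'a::{finite,field} mat2 set"
  assumes "maximal_A_order D \<Lambda>"
  shows "mat 1 \<in> stabilizer (units_of_order \<Lambda>) v"
    and "\<And>g h. g \<in> stabilizer (units_of_order \<Lambda>) v \<Longrightarrow> h \<in> stabilizer (units_of_order \<Lambda>) v
          \<Longrightarrow> g ** h \<in> stabilizer (units_of_order \<Lambda>) v"
proof -
  have o: "mat 1 \<in> \<Lambda>" "\<And>x y. x \<in> \<Lambda> \<Longrightarrow> y \<in> \<Lambda> \<Longrightarrow> x ** y \<in> \<Lambda>"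
    using assms unfolding maximal_A_order_def A_order_def by auto
  show "mat 1 \<in> stabilizer (units_of_order \<Lambda>) v"
    unfolding stabilizer_def units_of_order_def using o act_vertex_1 by fastforce
  fix g h assume g: "g \<in> stabilizer (units_of_order \<Lambda>) v" and h: "h \<in> stabilizer (units_of_order \<Lambda>) v"
  obtain g' where g': "g \<in> \<Lambda>" "g' \<in> \<Lambda>" "g ** g' = mat 1" "g' ** g = mat 1" "act_vertex g v = v"
    using g unfolding stabilizer_def units_of_order_def by blast
  obtain h' where h': "h \<in> \<Lambda>" "h' \<in> \<Lambda>" "h ** h' = mat 1" "h' ** h = mat 1" "act_vertex h v = v"
    using h unfolding stabilizer_def units_of_order_def by blast
  have "(g ** h) ** (h' ** g') = mat 1"
    by (metis g'(3) h'(3) matrix_mul_assoc matrix_mul_rid)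
  moreover have "(h' ** g') ** (g ** h) = mat 1"
    by (metis g'(4) h'(4) matrix_mul_assoc matrix_mul_rid)
  moreover have "act_vertex (g ** h) v = v" using g'(5) h'(5) act_vertex_mult by metis
  ultimately show "g ** h \<in> stabilizer (units_of_order \<Lambda>) v"
    unfolding stabilizer_def units_of_order_def using o g' h' by blast
qed

definition type_ring :: "'b::field ring" where
  "type_ring = \<lparr>carrier = UNIV, monoid.mult = (*), one = 1, ring.zero = 0, add = (+)\<rparr>"

lemma field_type_ring: "field (type_ring :: 'b::field ring)"
proof -
  have "\<exists>y. x + y = 0" for x :: 'b
    using add.right_inverse by blast
  moreover have "x \<noteq> 0 \<Longrightarrow> \<exists>y. x * y = 1" for x :: 'b
    by (rule exI[of _ "inverse x"]) auto
  ultimately show ?thesis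
    unfolding type_ring_def using add.right_inverse
    by unfold_locales (auto simp: algebra_simps Units_def)
qed

lemma gen_exists:
  "\<exists>a::'b::{finite,field}. a \<noteq> 0 \<and> (\<forall>x. x \<noteq> 0 \<longrightarrow> (\<exists>i. x = a ^ i))"
proof -
  interpret F: field "type_ring :: 'b ring" by (rule field_type_ring)
  have "finite (carrier (type_ring :: 'b ring))" by simp
  then obtain a where a: "a \<in> carrier (mult_of (type_ring :: 'b ring))"
    "carrier (mult_of (type_ring :: 'b ring)) = {a [^]\<^bsub>type_ring\<^esub> i | i::nat. i \<in> UNIV}"
    using F.finite_field_mult_group_has_gen by blast
  have p: "a [^]\<^bsub>type_ring\<^esub> (i::nat) = a ^ i" for i
    by (induction i) (simp_all add: type_ring_def)
  have c: "carrier (mult_of (type_ring :: 'b ring)) = {x. x \<noteq> 0}"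
    by (auto simp: type_ring_def)
  show ?thesis using a unfolding c p by auto
qed

lemma gen_order:
  fixes a :: "'b::{finite,field}"
  assumes a0: "a \<noteq> 0" and gen: "\<forall>x. x \<noteq> 0 \<longrightarrow> (\<exists>i. x = a ^ i)"
    and N: "N = CARD('b) - 1"
  shows "a ^ N = 1" "\<And>d. 0 < d \<Longrightarrow> d < N \<Longrightarrow> a ^ d \<noteq> 1"
proof -
  have cN: "card {x::'b. x \<noteq> 0} = N"
  proof -
    have "{x::'b. x \<noteq> 0} = UNIV - {0}" by auto
    then show ?thesis using N by (simp add: card_Diff_singleton)
  qed
  have O1: "N \<le> d" if d: "0 < d" "a ^ d = 1" for d
  proof -
    have "{x::'b. x \<noteq> 0} \<subseteq> (\<lambda>i. a ^ i) ` {..<d}"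
    proof
      fix x :: 'b assume "x \<in> {x. x \<noteq> 0}"
      then obtain i where i: "x = a ^ i" using gen by auto
      have "a ^ i = a ^ (d * (i div d) + i mod d)" by simp
      also have "\<dots> = a ^ (d * (i div d)) * a ^ (i mod d)" by (rule power_add)
      also have "\<dots> = (a ^ d) ^ (i div d) * a ^ (i mod d)" by (simp add: power_mult)
      finally have "a ^ i = (a ^ d) ^ (i div d) * a ^ (i mod d)" .
      then have "x = a ^ (i mod d)" using d i by simp
      moreover have "i mod d < d" using d by simp
      ultimately show "x \<in> (\<lambda>i. a ^ i) ` {..<d}" by auto
    qed
    then have "card {x::'b. x \<noteq> 0} \<le> card ((\<lambda>i. a ^ i) ` {..<d})" by (intro card_mono) auto
    also have "\<dots> \<le> d" using card_image_le[of "{..<d}" "\<lambda>i. a ^ i"] by simp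
    finally show ?thesis using cN by simp
  qed
  show "a ^ d \<noteq> 1" if dd: "0 < d" "d < N" for d
  proof
    assume "a ^ d = 1"
    then have "N \<le> d" by (rule O1[OF dd(1)])
    then show False using dd(2) by simp
  qed
  have "\<not> inj_on (\<lambda>i. a ^ i) {..N}"
  proof
    assume i: "inj_on (\<lambda>i. a ^ i) {..N}"
    have "(\<lambda>i. a ^ i) ` {..N} \<subseteq> {x. x \<noteq> 0}" using a0 by auto
    then have "card {..N} \<le> card {x::'b. x \<noteq> 0}" using card_inj_on_le[OF i] by auto
    then show False using cN by simp
  qed
  then obtain i j where ij: "i \<le> N" "j \<le> N" "i \<noteq> j" "a ^ i = a ^ j"
    unfolding inj_on_def by auto
  have key: "a ^ (y - x) = 1" if "x < y" "a ^ x = a ^ y" for x y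
  proof -
    have "y = x + (y - x)" using that by simp
    then have "a ^ y = a ^ x * a ^ (y - x)" by (metis power_add)
    then show ?thesis using that a0 by simp
  qed
  show "a ^ N = 1"
  proof (cases "i < j")
    case True
    then have "a ^ (j - i) = 1" using key ij by blast
    moreover have "N \<le> j - i" using O1 True \<open>a ^ (j - i) = 1\<close> by simp
    ultimately show ?thesis using ij by (metis diff_le_self le_antisym le_trans)
  next
    case False
    then have "j < i" using ij by simp
    then have "a ^ (i - j) = 1" using key ij by metis
    moreover have "N \<le> i - j" using O1 \<open>j < i\<close> \<open>a ^ (i - j) = 1\<close> by simp
    ultimately show ?thesis using ij by (metis diff_le_self le_antisym le_trans)
  qed
qed



lemma conj_pow:
  assumes "h ** hi = mat 1" "hi ** h = mat 1"
  shows "mpow (hi ** g ** h) n = hi ** mpow g n ** h"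
proof (induction n)
  case 0 then show ?case using assms by simp
next
  case (Suc n)
  have "mpow (hi ** g ** h) (Suc n) = (hi ** g ** h) ** (hi ** mpow g n ** h)"
    using Suc by (simp add: mpow_Suc)
  also have "\<dots> = hi ** g ** (h ** hi) ** mpow g n ** h" by (simp add: matrix_mul_assoc)
  also have "\<dots> = hi ** mpow g (Suc n) ** h" using assms by (simp add: matrix_mul_assoc mpow_Suc)
  finally show ?case .
qed

theorem corollary5p3:
  fixes D \<Lambda> :: "'a::{finite,field} mat2 set"
    and v :: "'a vec2 set set"
    and \<phi> :: "'a mat2 \<Rightarrow> 'b::{finite,field}"
  assumes "quaternion_division_algebra D"
    and "maximal_A_order D \<Lambda>"
    and "BT_vertex v"
    and "CARD('b) = CARD('a) ^ 2"
    and "bij_betw \<phi> (stabilizer (units_of_order \<Lambda>) v) {x. x \<noteq> 0}"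
    and "\<forall>g\<in>stabilizer (units_of_order \<Lambda>) v. \<forall>h\<in>stabilizer (units_of_order \<Lambda>) v.
           \<phi> (g ** h) = \<phi> g * \<phi> h"
  shows "\<forall>w w'. BT_edge v w \<and> BT_edge v w' \<longrightarrow>
           (\<exists>g\<in>stabilizer (units_of_order \<Lambda>) v. act_vertex g w = w')"
proof -
  define S where "S = stabilizer (units_of_order \<Lambda>) v"
  define N where "N = CARD('a) * CARD('a) - 1"
  have S1: "mat 1 \<in> S" unfolding S_def by (rule stab_facts(1)[OF assms(2)])
  have Smul: "g ** h \<in> S" if "g \<in> S" "h \<in> S" for g h
    using stab_facts(2)[OF assms(2)] that unfolding S_def by blast
  have bij: "bij_betw \<phi> S {x. x \<noteq> 0}" using assms(5) S_def by simp
  have hom: "\<phi> (g ** h) = \<phi> g * \<phi> h" if "g \<in> S" "h \<in> S" for g h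
    using assms(6) that S_def by simp
  have q2: "CARD('a) \<ge> 2"
  proof -
    have "card {0::'a, 1} \<le> CARD('a)" by (rule card_mono) auto
    then show ?thesis by simp
  qed
  have "CARD('a) * CARD('a) \<ge> 2 * 2" using mult_le_mono[OF q2 q2] .
  then have N0: "N > 0" unfolding N_def by linarith
  obtain a :: 'b where a0: "a \<noteq> 0" and gen: "\<forall>x. x \<noteq> 0 \<longrightarrow> (\<exists>i. x = a ^ i)"
    using gen_exists by blast
  have NB: "N = CARD('b) - 1"
  proof -
    have "CARD('b) = CARD('a) * CARD('a)" using assms(4) by (simp only: power2_eq_square)
    then show ?thesis by (simp only: N_def)
  qed
  note ao = gen_order[OF a0 gen NB]
  define g where "g = inv_into S \<phi> a"
  have aim: "a \<in> \<phi> ` S" using bij a0 unfolding bij_betw_def by simp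
  have gS: "g \<in> S" unfolding g_def by (rule inv_into_into[OF aim])
  have pg: "\<phi> g = a" unfolding g_def by (rule f_inv_into_f[OF aim])
  have p1: "\<phi> (mat 1) = 1"
  proof -
    have e: "\<phi> (mat 1) * \<phi> (mat 1) = \<phi> (mat 1) * 1" using hom[OF S1 S1] by simp
    have nz: "\<phi> (mat 1) \<noteq> 0" using bij S1 unfolding bij_betw_def by auto
    show ?thesis using mult_left_cancel[OF nz] e by simp
  qed
  have powS: "mpow g n \<in> S" for n
    by (induction n) (simp_all add: S1 mpow_Suc Smul gS)
  have ppow: "\<phi> (mpow g n) = a ^ n" for n
    by (induction n) (simp_all add: p1 mpow_Suc hom gS powS pg)
  have injp: "inj_on \<phi> S" using bij by (simp add: bij_betw_def)
  have gN: "mpow g N = mat 1"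
    using inj_onD[OF injp, of "mpow g N" "mat 1"] ppow ao(1) p1 powS S1 by simp
  have gd: "mpow g d \<noteq> mat 1" if "0 < d" "d < N" for d
    using ppow[of d] p1 ao(2)[OF that] by auto
  obtain L0 where L0: "O_lattice L0" "v = homothety_class L0" using assms(3) unfolding BT_vertex_def by blast
  obtain h :: "'a mat2" where h: "invertible h" "L0 = (\<lambda>y. h *v y) ` Ostd" using Olat[OF L0(1)] by blast
  obtain hi where hi: "h ** hi = mat 1" "hi ** h = mat 1" using h(1) unfolding invertible_def by blast
  have r: "X ** h ** hi = X" for X :: "'a mat2" by (metis hi(1) matrix_mul_assoc matrix_mul_rid)
  define g' where "g' = hi ** g ** h"
  have g'pow: "mpow g' n = hi ** mpow g n ** h" for n unfolding g'_def by (rule conj_pow[OF hi])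
  have g'N: "mpow g' N = mat 1" using g'pow[of N] gN hi by simp
  have g'd: "mpow g' d \<noteq> mat 1" if "0 < d" "d < N" for d
  proof
    assume "mpow g' d = mat 1"
    then have "h ** (hi ** mpow g d ** h) ** hi = mat 1" using g'pow[of d] hi by simp
    then have "mpow g d = mat 1" using hi by (simp add: matrix_mul_assoc r)
    then show False using gd that by blast
  qed
  have actv: "act_vertex g v = v" using gS unfolding S_def stabilizer_def by blast
  have "(\<lambda>y. g *v y) ` L0 \<in> v"
  proof -
    have "scale_set 1 L0 \<in> homothety_class L0" unfolding homothety_class_def
      by (intro CollectI exI[of _ 1]) simp
    then have "L0 \<in> v" using L0(2) scale_1[of L0] by simp
    then show ?thesis using actv unfolding act_vertex_def by blast
  qed
  then obtain c where c: "c \<noteq> 0" "(\<lambda>y. g *v y) ` L0 = scale_set c L0"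
    using L0(2) unfolding homothety_class_def by blast
  have A: "\<exists>z\<in>Ostd. g' *v y = c *s z" if y: "y \<in> Ostd" for y
  proof -
    have "g *v (h *v y) \<in> scale_set c L0" using c(2) h(2) y by blast
    then obtain z where z: "z \<in> Ostd" "g *v (h *v y) = c *s (h *v z)"
      unfolding scale_set_def h(2) by blast
    have "g' *v y = hi *v (g *v (h *v y))" unfolding g'_def by (simp add: matrix_vector_mul_assoc matrix_mul_assoc)
    also have "\<dots> = c *s z" using z(2) hi by (simp add: mv_smult matrix_vector_mul_assoc)
    finally show ?thesis using z by blast
  qed
  have B: "\<exists>y\<in>Ostd. c *s z = g' *v y" if z: "z \<in> Ostd" for z
  proof -
    have "c *s (h *v z) \<in> (\<lambda>y. g *v y) ` L0" using c(2) h(2) z unfolding scale_set_def by blast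
    then obtain y where y: "y \<in> Ostd" "c *s (h *v z) = g *v (h *v y)"
      unfolding h(2) by blast
    have "g' *v y = hi *v (g *v (h *v y))" unfolding g'_def by (simp add: matrix_vector_mul_assoc matrix_mul_assoc)
    also have "\<dots> = c *s z" using y(2)[symmetric] hi by (simp add: mv_smult matrix_vector_mul_assoc)
    finally show ?thesis using y by metis
  qed
  have PQ: "(\<forall>y\<in>Ostd. \<exists>z\<in>Ostd. mpow g' n *v y = c ^ n *s z) \<and>
            (\<forall>z\<in>Ostd. \<exists>y\<in>Ostd. c ^ n *s z = mpow g' n *v y)" for n
  proof (induction n)
    case 0 then show ?case by auto
  next
    case (Suc n)
    have P: "\<exists>z\<in>Ostd. mpow g' (Suc n) *v y = c ^ Suc n *s z" if y: "y \<in> Ostd" for y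
    proof -
      obtain z where z: "z \<in> Ostd" "g' *v y = c *s z" using A[OF y] by blast
      obtain z' where z': "z' \<in> Ostd" "mpow g' n *v z = c ^ n *s z'" using Suc z(1) by blast
      have "mpow g' (Suc n) *v y = mpow g' n *v (g' *v y)"
        by (simp add: mpow_Suc' matrix_vector_mul_assoc)
      also have "\<dots> = c ^ Suc n *s z'" using z z' by (simp add: mv_smult vector_smult_assoc mult.commute)
      finally show ?thesis using z' by blast
    qed
    have Q: "\<exists>y\<in>Ostd. c ^ Suc n *s z = mpow g' (Suc n) *v y" if z: "z \<in> Ostd" for z
    proof -
      obtain y where y: "y \<in> Ostd" "c ^ n *s z = mpow g' n *v y" using Suc z by blast
      obtain y' where y': "y' \<in> Ostd" "c *s y = g' *v y'" using B[OF y(1)] by blast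
      have "c ^ Suc n *s z = c *s (c ^ n *s z)" by (simp add: vector_smult_assoc)
      also have "\<dots> = mpow g' n *v (c *s y)" using y by (simp add: mv_smult)
      also have "\<dots> = mpow g' (Suc n) *v y'" using y' by (simp add: mpow_Suc' matrix_vector_mul_assoc)
      finally show ?thesis using y' by blast
    qed
    show ?case using P Q by blast
  qed
  define e1 where "e1 = ((\<chi> k. if k = 1 then 1 else 0) :: 'a vec2)"
  have e1O: "e1 \<in> Ostd" unfolding e1_def Ostd_def by simp
  have e11: "e1 $ 1 = 1" unfolding e1_def by simp
  obtain z where z: "z \<in> Ostd" "e1 = c ^ N *s z" using PQ[of N] e1O g'N by fastforce
  obtain y where y: "y \<in> Ostd" "c ^ N *s e1 = y" using PQ[of N] e1O g'N by fastforce
  have y1: "y $ 1 \<in> O_ring" using y(1) unfolding Ostd_def by blast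
  have "(c ^ N *s e1) $ 1 = c ^ N" using e11 by simp
  then have cN1: "c ^ N \<in> O_ring" using y1 y(2) by simp
  have "e1 $ 1 = (c ^ N *s z) $ 1" using z(2) by simp
  then have "c ^ N * z $ 1 = 1" using e11 by simp
  then have "inverse (c ^ N) = z $ 1" by (rule inverse_unique)
  then have cN2: "inverse (c ^ N) \<in> O_ring" using z(1) unfolding Ostd_def by simp
  have cNz: "c ^ N \<noteq> 0" using c(1) by simp
  have "fls_subdegree (c ^ N) \<ge> 0" using O_subdeg[OF cN1] .
  moreover have "fls_subdegree (inverse (c ^ N)) \<ge> 0" using O_subdeg[OF cN2] .
  ultimately have "fls_subdegree (c ^ N) = 0" by simp
  then have "int N * fls_subdegree c = 0" by (simp add: fls_subdegree_pow)
  then have "fls_subdegree c = 0" using N0 by simp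
  then have cO: "c \<in> O_ring" unfolding O_ring_def by simp
  have ig': "integ g'"
  proof (rule integ_cols)
    fix y :: "'a vec2" assume "y \<in> Ostd"
    then obtain z where "z \<in> Ostd" "g' *v y = c *s z" using A by blast
    then show "g' *v y \<in> Ostd" using cO unfolding Ostd_def by simp
  qed
  have vh: "v = homothety_class ((\<lambda>y. h *v y) ` Ostd)" using L0(2) h(2) by simp
  show ?thesis
  proof (intro allI impI)
    fix w w' assume ww: "BT_edge v w \<and> BT_edge v w'"
    obtain c1 x1 where e1': "c1 \<noteq> 0" "x1 \<noteq> 0" "w = homothety_class ((\<lambda>y. (mat c1 ** h) *v y) ` Pl x1)"
      using edge_class[OF h(1)] ww vh by blast
    obtain c2 x2 where e2': "c2 \<noteq> 0" "x2 \<noteq> 0" "w' = homothety_class ((\<lambda>y. (mat c2 ** h) *v y) ` Pl x2)"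
      using edge_class[OF h(1)] ww vh by blast
    obtain k where k: "(\<lambda>y. mpow g' k *v y) ` Pl x1 = Pl x2"
      using core_transitive[OF ig' g'N N_def g'd e1'(2) e2'(2)] by blast
    have comm: "mpow g k ** h = h ** mpow g' k"
      unfolding g'pow using hi by (simp add: matrix_mul_assoc)
    have pt: "mpow g k *v ((mat c1 ** h) *v y) = (c1 / c2) *s ((mat c2 ** h) *v (mpow g' k *v y))" for y
    proof -
      have "mpow g k *v ((mat c1 ** h) *v y) = c1 *s ((mpow g k ** h) *v y)"
        by (simp add: smat_mv mv_smult matrix_vector_mul_assoc)
      also have "\<dots> = c1 *s (h *v (mpow g' k *v y))" by (simp add: comm matrix_vector_mul_assoc)
      also have "\<dots> = (c1 / c2) *s ((mat c2 ** h) *v (mpow g' k *v y))"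
        using e2'(1) by (simp add: smat_mv vector_smult_assoc)
      finally show ?thesis .
    qed
    have "(\<lambda>u. mpow g k *v u) ` ((\<lambda>y. (mat c1 ** h) *v y) ` Pl x1)
        = scale_set (c1 / c2) ((\<lambda>y. (mat c2 ** h) *v y) ` Pl x2)"
      unfolding k[symmetric] scale_set_def image_image pt ..
    moreover have cc: "c1 / c2 \<noteq> 0" using e1'(1) e2'(1) by simp
    ultimately have "act_vertex (mpow g k) w = w'"
      unfolding e1'(3) e2'(3) act_hc using hc_scale[OF cc] by simp
    then show "\<exists>g\<in>stabilizer (units_of_order \<Lambda>) v. act_vertex g w = w'"
      using powS[of k] unfolding S_def by blast
  qed
qed


end
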